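(* Let $G$ be a finite nonabelian group and let $N$ be a normal subgroup of $G$. Then either $K(G)\le N$, or both $N\le Z(G)$ and $Z(G/N)=Z(G)/N$.
   Context: All groups are finite. For $\chi\in\mathrm{Irr}(G)$, the center of $\chi$ is $Z(\chi)=\{g\in G : |\chi(g)|=\chi(1)\}$; equivalently $Z(\chi)/\ker(\chi)=Z(G/\ker(\chi))$. For a nonabelian group $G$, let $\mathcal{X}=\{\chi\in\mathrm{Irr}(G) : Z(\chi)>Z(G)\}$ (strict containment) and define $K(G)=\bigcap_{\chi\in\mathcal{X}}\ker(\chi)$. If $G$ is abelian, set $K(G)=G$. *)

theory Defs
  imports "HOL-Algebra.Algebra" "Jordan_Normal_Form.Matrix"
begin

definition group_center :: "('a, 'b) monoid_scheme \<Rightarrow> 'a set" where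
  "group_center G = {z \<in> carrier G. \<forall>g \<in> carrier G. z \<otimes>\<^bsub>G\<^esub> g = g \<otimes>\<^bsub>G\<^esub> z}"

definition is_rep :: "('a, 'b) monoid_scheme \<Rightarrow> nat \<Rightarrow> ('a \<Rightarrow> complex mat) \<Rightarrow> bool" where
  "is_rep G n \<rho> \<longleftrightarrow>
     (\<forall>g \<in> carrier G. \<rho> g \<in> carrier_mat n n) \<and>
     \<rho> \<one>\<^bsub>G\<^esub> = 1\<^sub>m n \<and>
     (\<forall>g \<in> carrier G. \<forall>h \<in> carrier G. \<rho> (g \<otimes>\<^bsub>G\<^esub> h) = \<rho> g * \<rho> h)"

definition invariant_subspace :: "('a, 'b) monoid_scheme \<Rightarrow> nat \<Rightarrow> ('a \<Rightarrow> complex mat) \<Rightarrow> complex vec set \<Rightarrow> bool" where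
  "invariant_subspace G n \<rho> W \<longleftrightarrow>
     W \<subseteq> carrier_vec n \<and> 0\<^sub>v n \<in> W \<and>
     (\<forall>v \<in> W. \<forall>w \<in> W. v + w \<in> W) \<and>
     (\<forall>c. \<forall>v \<in> W. c \<cdot>\<^sub>v v \<in> W) \<and>
     (\<forall>g \<in> carrier G. \<forall>v \<in> W. \<rho> g *\<^sub>v v \<in> W)"

definition irreducible_rep :: "('a, 'b) monoid_scheme \<Rightarrow> nat \<Rightarrow> ('a \<Rightarrow> complex mat) \<Rightarrow> bool" where
  "irreducible_rep G n \<rho> \<longleftrightarrow> is_rep G n \<rho> \<and> n > 0 \<and>
     (\<forall>W. invariant_subspace G n \<rho> W \<longrightarrow> W = {0\<^sub>v n} \<or> W = carrier_vec n)"

definition mat_trace :: "complex mat \<Rightarrow> complex" where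
  "mat_trace A = (\<Sum>i<dim_row A. A $$ (i, i))"

definition Irr :: "('a, 'b) monoid_scheme \<Rightarrow> ('a \<Rightarrow> complex) set" where
  "Irr G = {\<chi>. \<exists>n \<rho>. irreducible_rep G n \<rho> \<and> \<chi> = (\<lambda>g. mat_trace (\<rho> g))}"

definition char_ker :: "('a, 'b) monoid_scheme \<Rightarrow> ('a \<Rightarrow> complex) \<Rightarrow> 'a set" where
  "char_ker G \<chi> = {g \<in> carrier G. \<chi> g = \<chi> \<one>\<^bsub>G\<^esub>}"

definition char_center :: "('a, 'b) monoid_scheme \<Rightarrow> ('a \<Rightarrow> complex) \<Rightarrow> 'a set" where
  "char_center G \<chi> = {g \<in> carrier G. cmod (\<chi> g) = cmod (\<chi> \<one>\<^bsub>G\<^esub>)}"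

definition K_set :: "('a, 'b) monoid_scheme \<Rightarrow> 'a set" where
  "K_set G = (if comm_group G then carrier G else
     carrier G \<inter> \<Inter> {char_ker G \<chi> | \<chi>. \<chi> \<in> Irr G \<and> group_center G \<subset> char_center G \<chi>})"

end

theory Submission
  imports Defs "Jordan_Normal_Form.VS_Connect" "Jordan_Normal_Form.Char_Poly"
begin
context vec_space begin
lemma li_extend:
  assumes "S \<subseteq> Y" "Y \<subseteq> carrier_vec n" "lin_indpt S" "finite S"
  shows "\<exists>T. S \<subseteq> T \<and> T \<subseteq> Y \<and> finite T \<and> lin_indpt T \<and> Y \<subseteq> local.span T"
  using assms
proof (induct "n - card S" arbitrary: S rule: less_induct)
  case (less S)
  show ?case
  proof (cases "Y \<subseteq> local.span S")
    case True
    then show ?thesis using less(2-5) by blast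
  next
    case False
    then obtain v where v: "v \<in> Y" "v \<notin> local.span S" by blast
    have Sc: "S \<subseteq> carrier_vec n" using less(2,3) by blast
    have vc: "v \<in> carrier_vec n" using v less(3) by blast
    have vS: "v \<notin> S" using v in_own_span[OF Sc] by blast
    have li: "lin_indpt (S \<union> {v})" using lin_dep_iff_in_span[OF Sc less(4) vc vS] v by blast
    have SVc: "S \<union> {v} \<subseteq> carrier_vec n" using Sc vc by blast
    have "card (S \<union> {v}) \<le> local.dim" by (rule li_le_dim[OF fin_dim SVc li])
    hence "card (S \<union> {v}) \<le> n" unfolding dim_is_n .
    moreover have "card (S \<union> {v}) = Suc (card S)" using vS less(5) by simp
    ultimately have lt: "n - card (S \<union> {v}) < n - card S" by simp
    have sub: "S \<union> {v} \<subseteq> Y" using v less(2) by blast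
    have fin: "finite (S \<union> {v})" using less(5) by simp
    have ex: "\<exists>T. S \<union> {v} \<subseteq> T \<and> T \<subseteq> Y \<and> finite T \<and> lin_indpt T \<and> Y \<subseteq> local.span T"
      by (rule less(1)[OF lt sub less(3) li fin])
    then obtain T where T: "S \<union> {v} \<subseteq> T" "T \<subseteq> Y" "finite T" "lin_indpt T" "Y \<subseteq> local.span T"
      by (elim exE conjE)
    show ?thesis by (rule exI[of _ T], intro conjI, use T in auto)
  qed
qed

end

lemma mat_of_cols_append_mult:
  assumes c: "set (b1 @ b2) \<subseteq> carrier_vec n"
  shows "mat_of_cols n (b1 @ b2) *\<^sub>v vec (length (b1 @ b2)) (\<lambda>l. if l < length b1 then c l else 0)
       = mat_of_cols n b1 *\<^sub>v vec (length b1) c"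
proof (rule eq_vecI)
  show "dim_vec (mat_of_cols n (b1 @ b2) *\<^sub>v vec (length (b1 @ b2)) (\<lambda>l. if l < length b1 then c l else 0))
      = dim_vec (mat_of_cols n b1 *\<^sub>v vec (length b1) c)" by simp
  fix i assume "i < dim_vec (mat_of_cols n b1 *\<^sub>v vec (length b1) c)"
  hence i: "i < n" by simp
  have "(mat_of_cols n (b1 @ b2) *\<^sub>v vec (length (b1 @ b2)) (\<lambda>l. if l < length b1 then c l else 0)) $ i
     = (\<Sum>l = 0..<length (b1 @ b2). (b1 @ b2) ! l $ i * (if l < length b1 then c l else 0))"
    using i by (simp add: index_mult_mat_vec scalar_prod_def mat_of_cols_index)
  also have "\<dots> = (\<Sum>l = 0..<length b1. b1 ! l $ i * c l)"
    by (rule sum.mono_neutral_cong_right) (auto simp: nth_append)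
  also have "\<dots> = (mat_of_cols n b1 *\<^sub>v vec (length b1) c) $ i"
    using i by (simp add: index_mult_mat_vec scalar_prod_def mat_of_cols_index)
  finally show "(mat_of_cols n (b1 @ b2) *\<^sub>v vec (length (b1 @ b2)) (\<lambda>l. if l < length b1 then c l else 0)) $ i
     = (mat_of_cols n b1 *\<^sub>v vec (length b1) c) $ i" .
qed

lemma block_reduce:
  fixes \<rho> :: "'g \<Rightarrow> complex mat" and G :: "('g,'b) monoid_scheme"
  assumes rep: "is_rep G n \<rho>" and inv: "invariant_subspace G n \<rho> W"
    and W0: "W \<noteq> {0\<^sub>v n}" and W1: "W \<noteq> carrier_vec n"
  shows "\<exists>k P Q. 0 < k \<and> k < n \<and> P \<in> carrier_mat n n \<and> Q \<in> carrier_mat n n \<and>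
     Q * P = 1\<^sub>m n \<and> P * Q = 1\<^sub>m n \<and>
     (\<forall>h\<in>carrier G. \<forall>i j. k \<le> i \<longrightarrow> i < n \<longrightarrow> j < k \<longrightarrow> (Q * \<rho> h * P) $$ (i,j) = 0)"
proof -
  interpret V: vec_space "TYPE(complex)" n .
  have Wc: "W \<subseteq> carrier_vec n" and W0in: "0\<^sub>v n \<in> W"
   and Wadd: "\<And>v w. v \<in> W \<Longrightarrow> w \<in> W \<Longrightarrow> v + w \<in> W"
   and Wsm: "\<And>c v. v \<in> W \<Longrightarrow> c \<cdot>\<^sub>v v \<in> W"
   and Winv: "\<And>h v. h \<in> carrier G \<Longrightarrow> v \<in> W \<Longrightarrow> \<rho> h *\<^sub>v v \<in> W"
    using inv unfolding invariant_subspace_def by auto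
  have rc: "\<And>h. h \<in> carrier G \<Longrightarrow> \<rho> h \<in> carrier_mat n n" using rep unfolding is_rep_def by auto
  have li0: "V.lin_indpt {}" by (simp add: V.lin_dep_def)
  have "\<exists>T. {} \<subseteq> T \<and> T \<subseteq> W \<and> finite T \<and> V.lin_indpt T \<and> W \<subseteq> V.span T"
    by (rule V.li_extend) (use Wc li0 in auto)
  then obtain B1 where B1: "B1 \<subseteq> W" "finite B1" "V.lin_indpt B1" "W \<subseteq> V.span B1"
    by (elim exE conjE)
  have B1c: "B1 \<subseteq> carrier_vec n" using B1(1) Wc by (rule subset_trans)
  have "\<exists>T. B1 \<subseteq> T \<and> T \<subseteq> carrier_vec n \<and> finite T \<and> V.lin_indpt T \<and> carrier_vec n \<subseteq> V.span T"
    by (rule V.li_extend) (use B1c B1 in auto)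
  then obtain T where T: "B1 \<subseteq> T" "T \<subseteq> carrier_vec n" "finite T" "V.lin_indpt T" "carrier_vec n \<subseteq> V.span T"
    by (elim exE conjE)
  obtain b1 where b1: "set b1 = B1" "distinct b1" using finite_distinct_list[OF B1(2)] by blast
  have finT: "finite (T - B1)" using T(3) by simp
  obtain b2 where b2: "set b2 = T - B1" "distinct b2" using finite_distinct_list[OF finT] by blast
  define ws where "ws = b1 @ b2"
  have ws_set: "set ws = T" using b1 b2 T(1) unfolding ws_def by auto
  have ws_dist: "distinct ws" using b1 b2 unfolding ws_def by auto
  have spanT: "V.span T = carrier_vec n" using T(5) V.span_closed[OF T(2)] by blast
  have basis: "V.basis T" unfolding V.basis_def using T(2,4) spanT by blast
  have card: "card T = n" using V.dim_basis[OF T(3) basis] V.dim_is_n by simp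
  have len: "length ws = n" using distinct_card[OF ws_dist] ws_set card by simp
  define k where "k = length b1"
  define P where "P = mat_of_cols n ws"
  have Pc: "P \<in> carrier_mat n n" unfolding P_def using len mat_of_cols_carrier by metis
  have wsc: "set ws \<subseteq> carrier_vec n" using ws_set T(2) by simp
  have wsd: "\<forall>w\<in>set ws. dim_vec w = n" using wsc by auto
  have span_ws: "\<exists>c. v = P *\<^sub>v vec n c" if v: "v \<in> carrier_vec n" for v
  proof -
    have "v \<in> V.span (set ws)" using T(5) ws_set v by auto
    hence "v \<in> V.span_list ws" using V.span_list_as_span[OF wsc] by simp
    then obtain c where "v = V.lincomb_list c ws" unfolding V.span_list_def by blast
    thus ?thesis using V.lincomb_list_as_mat_mult[OF wsd, of c] len unfolding P_def by auto
  qed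
  have "\<forall>j. \<exists>c. j < n \<longrightarrow> unit_vec n j = P *\<^sub>v vec n c" using span_ws by auto
  then obtain cc where cc: "\<And>j. j < n \<Longrightarrow> unit_vec n j = P *\<^sub>v vec n (cc j)" by metis
  define Q where "Q = mat n n (\<lambda>(i,j). cc j i)"
  have Qc: "Q \<in> carrier_mat n n" unfolding Q_def by simp
  have colQ: "col Q j = vec n (cc j)" if "j < n" for j
    using that unfolding Q_def by (intro eq_vecI) auto
  have PQ: "P * Q = 1\<^sub>m n"
  proof (rule eq_matI)
    fix i j assume ij: "i < dim_row (1\<^sub>m n)" "j < dim_col (1\<^sub>m n)"
    hence i: "i < n" and j: "j < n" by auto
    have "(P * Q) $$ (i, j) = row P i \<bullet> col Q j" using i j Pc Qc by (simp add: index_mult_mat)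
    also have "\<dots> = (P *\<^sub>v vec n (cc j)) $ i" using i j Pc colQ by (simp add: index_mult_mat_vec)
    also have "\<dots> = unit_vec n j $ i" using cc[OF j] by simp
    also have "\<dots> = 1\<^sub>m n $$ (i, j)" using i j by simp
    finally show "(P * Q) $$ (i, j) = 1\<^sub>m n $$ (i, j)" .
  qed (use Pc Qc in auto)
  have QP: "Q * P = 1\<^sub>m n" using mat_mult_left_right_inverse[OF Pc Qc PQ] .
  have k0: "0 < k"
  proof (rule ccontr)
    assume "\<not> 0 < k"
    hence "B1 = {}" using b1 unfolding k_def by simp
    hence "W \<subseteq> {0\<^sub>v n}" using B1(4) V.span_empty by simp
    thus False using W0 W0in by blast
  qed
  have kn: "k < n"
  proof (rule ccontr)
    assume "\<not> k < n"
    have "length b1 + length b2 = n" using len unfolding ws_def by simp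
    hence "length b2 = 0" using \<open>\<not> k < n\<close> unfolding k_def by linarith
    hence "T = B1" using b2 T(1) by auto
    have sub: "LinearCombinations.submodule class_ring W (module_vec TYPE(complex) n)"
      by (rule submodule.intro[OF vec_module]) (use Wc W0in Wadd Wsm in \<open>auto simp: module_vec_simps\<close>)
    have "V.span B1 \<subseteq> W" by (rule V.span_is_subset[OF B1(1) sub])
    hence "carrier_vec n \<subseteq> W" using spanT \<open>T = B1\<close> by simp
    thus False using W1 Wc by blast
  qed
  have zero: "(Q * \<rho> h * P) $$ (i,j) = 0" if h: "h \<in> carrier G" and i: "k \<le> i" "i < n" and j: "j < k" for h i j
  proof -
    have jl: "j < length b1" using j unfolding k_def .
    have wj: "ws ! j = b1 ! j" unfolding ws_def using jl by (simp add: nth_append)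
    have "b1 ! j \<in> W" using B1(1) b1(1) jl nth_mem by blast
    hence "\<rho> h *\<^sub>v (b1 ! j) \<in> W" by (rule Winv[OF h])
    hence "\<rho> h *\<^sub>v (b1 ! j) \<in> V.span (set b1)" using B1(4) b1(1) by blast
    hence "\<rho> h *\<^sub>v (b1 ! j) \<in> V.span_list b1" using V.span_list_as_span B1c b1(1) by simp
    then obtain c where c: "\<rho> h *\<^sub>v (b1 ! j) = V.lincomb_list c b1" unfolding V.span_list_def by blast
    have b1d: "\<forall>w\<in>set b1. dim_vec w = n" using B1c b1(1) by auto
    define c' where "c' = vec (length (b1 @ b2)) (\<lambda>l. if l < length b1 then c l else 0)"
    have "\<rho> h *\<^sub>v (b1 ! j) = mat_of_cols n b1 *\<^sub>v vec (length b1) c"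
      using c V.lincomb_list_as_mat_mult[OF b1d] by simp
    also have "\<dots> = P *\<^sub>v c'" unfolding P_def c'_def ws_def
      by (rule mat_of_cols_append_mult[symmetric]) (use wsc in \<open>simp add: ws_def\<close>)
    finally have eq: "\<rho> h *\<^sub>v (b1 ! j) = P *\<^sub>v c'" .
    have c'c: "c' \<in> carrier_vec n" using len unfolding c'_def ws_def by simp
    have colP: "col P j = b1 ! j" unfolding P_def using col_mat_of_cols[of j ws n] wj jl len wsc
      unfolding ws_def by (simp add: nth_append subset_code(1))
    have b1jc: "b1 ! j \<in> carrier_vec n" using B1c b1(1) jl nth_mem by blast
    have "(Q * \<rho> h * P) $$ (i,j) = row (Q * \<rho> h) i \<bullet> col P j"
      by (rule index_mult_mat(1)) (use i j kn Pc Qc in simp_all)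
    also have "\<dots> = ((Q * \<rho> h) *\<^sub>v col P j) $ i"
      by (rule index_mult_mat_vec[symmetric]) (use i Qc in simp)
    also have "(Q * \<rho> h) *\<^sub>v col P j = Q *\<^sub>v (\<rho> h *\<^sub>v (b1 ! j))"
      using colP assoc_mult_mat_vec[OF Qc rc[OF h] b1jc] by simp
    also have "\<dots> = Q *\<^sub>v (P *\<^sub>v c')" using eq by simp
    also have "\<dots> = (Q * P) *\<^sub>v c'" using assoc_mult_mat_vec[OF Qc Pc c'c] by simp
    also have "\<dots> = c'" using QP c'c by simp
    finally show ?thesis using i len unfolding c'_def k_def ws_def by simp
  qed
  show ?thesis using k0 kn Pc Qc QP PQ zero by blast
qed

lemma mult_entry:
  assumes "Xm \<in> carrier_mat a m" "Ym \<in> carrier_mat m b" "i < a" "j < b"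
  shows "(Xm * Ym) $$ (i,j) = (\<Sum>l<m. Xm $$ (i,l) * Ym $$ (l,j))"
  using assms by (simp add: index_mult_mat scalar_prod_def atLeast0LessThan)

lemma sum_split_shift:
  fixes f :: "nat \<Rightarrow> 'x::comm_monoid_add"
  assumes "k \<le> n"
  shows "(\<Sum>i<n. f i) = (\<Sum>i<k. f i) + (\<Sum>i<n-k. f (i+k))"
proof -
  obtain d where n: "n = k + d" using assms le_Suc_ex by blast
  have "(\<Sum>i<k+d. f i) = (\<Sum>i<k. f i) + (\<Sum>i<d. f (i+k))"
    by (induct d) (simp_all add: ac_simps)
  thus ?thesis using n by simp
qed

lemma mat_trace_carrier:
  "A \<in> carrier_mat n n \<Longrightarrow> mat_trace A = (\<Sum>i<n. A $$ (i,i))"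
  unfolding mat_trace_def by simp

lemma mat_trace_one: "mat_trace (1\<^sub>m n) = of_nat n"
  unfolding mat_trace_def by simp

lemma mat_trace_comm:
  assumes A: "A \<in> carrier_mat n m" and B: "B \<in> carrier_mat m n"
  shows "mat_trace (A * B) = mat_trace (B * A)"
proof -
  have "mat_trace (A * B) = (\<Sum>i<n. (A * B) $$ (i,i))" by (rule mat_trace_carrier) (use A B in auto)
  also have "\<dots> = (\<Sum>i<n. \<Sum>l<m. A $$ (i,l) * B $$ (l,i))"
    by (rule sum.cong[OF refl], rule mult_entry[OF A B]) auto
  also have "\<dots> = (\<Sum>l<m. \<Sum>i<n. B $$ (l,i) * A $$ (i,l))"
    by (subst sum.swap) (simp add: mult.commute)
  also have "\<dots> = (\<Sum>l<m. (B * A) $$ (l,l))"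
    by (rule sum.cong[OF refl], rule mult_entry[OF B A, symmetric]) auto
  also have "\<dots> = mat_trace (B * A)" by (rule mat_trace_carrier[symmetric]) (use A B in auto)
  finally show ?thesis .
qed

lemma block_split:
  fixes \<rho> :: "'g \<Rightarrow> complex mat" and G :: "('g,'b) monoid_scheme"
  assumes rep: "is_rep G n \<rho>"
    and Pc: "P \<in> carrier_mat n n" and Qc: "Q \<in> carrier_mat n n"
    and QP: "Q * P = 1\<^sub>m n" and PQ: "P * Q = 1\<^sub>m n" and kn: "k \<le> n"
    and zero: "\<forall>h\<in>carrier G. \<forall>i j. k \<le> i \<longrightarrow> i < n \<longrightarrow> j < k \<longrightarrow> (Q * \<rho> h * P) $$ (i,j) = 0"
  defines "A \<equiv> \<lambda>h. mat k k (\<lambda>(i,j). (Q * \<rho> h * P) $$ (i,j))"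
    and "C \<equiv> \<lambda>h. mat (n-k) (n-k) (\<lambda>(i,j). (Q * \<rho> h * P) $$ (i+k,j+k))"
  shows "is_rep G k A" "is_rep G (n-k) C"
    "\<And>h. h \<in> carrier G \<Longrightarrow> mat_trace (\<rho> h) = mat_trace (A h) + mat_trace (C h)"
    "\<And>h. \<rho> h = 1\<^sub>m n \<Longrightarrow> A h = 1\<^sub>m k \<and> C h = 1\<^sub>m (n-k)"
proof -
  define M where "M = (\<lambda>h. Q * \<rho> h * P)"
  have rc: "\<And>h. h \<in> carrier G \<Longrightarrow> \<rho> h \<in> carrier_mat n n"
    and r1: "\<rho> \<one>\<^bsub>G\<^esub> = 1\<^sub>m n"
    and rm: "\<And>g h. g \<in> carrier G \<Longrightarrow> h \<in> carrier G \<Longrightarrow> \<rho> (g \<otimes>\<^bsub>G\<^esub> h) = \<rho> g * \<rho> h"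
    using rep unfolding is_rep_def by auto
  have Mc: "\<And>h. h \<in> carrier G \<Longrightarrow> M h \<in> carrier_mat n n" unfolding M_def using rc Pc Qc by auto
  have PQX: "P * (Q * Xm) = Xm" if Xm: "Xm \<in> carrier_mat n m" for Xm m
  proof -
    have "P * (Q * Xm) = (P * Q) * Xm" using assoc_mult_mat[OF Pc Qc Xm] by simp
    also have "\<dots> = Xm" using PQ Xm by simp
    finally show ?thesis .
  qed
  have Mmul: "M (g \<otimes>\<^bsub>G\<^esub> h) = M g * M h" if g: "g \<in> carrier G" and h: "h \<in> carrier G" for g h
  proof -
    have rg: "\<rho> g \<in> carrier_mat n n" and rh: "\<rho> h \<in> carrier_mat n n" using rc g h by auto
    have "M g * M h = (Q * \<rho> g * P) * (Q * \<rho> h * P)" unfolding M_def ..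
    also have "\<dots> = Q * (\<rho> g * (P * (Q * (\<rho> h * P))))"
      using Pc Qc rg rh by (simp add: assoc_mult_mat[of _ n n _ n _ n])
    also have "P * (Q * (\<rho> h * P)) = \<rho> h * P" by (rule PQX[of _ n]) (use rh Pc in simp)
    also have "Q * (\<rho> g * (\<rho> h * P)) = Q * (\<rho> g * \<rho> h) * P"
      using Pc Qc rg rh by (simp add: assoc_mult_mat[of _ n n _ n _ n])
    finally show ?thesis unfolding M_def using rm[OF g h] by simp
  qed
  have M1: "M h = 1\<^sub>m n" if "\<rho> h = 1\<^sub>m n" for h
    unfolding M_def using that QP Qc Pc by simp
  have Mz: "M h $$ (i,j) = 0" if "h \<in> carrier G" "k \<le> i" "i < n" "j < k" for h i j
    using zero that unfolding M_def by blast
  have A_def': "A = (\<lambda>h. mat k k (\<lambda>(i,j). M h $$ (i,j)))" unfolding A_def M_def ..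
  have C_def': "C = (\<lambda>h. mat (n-k) (n-k) (\<lambda>(i,j). M h $$ (i+k,j+k)))" unfolding C_def M_def ..
  show "is_rep G k A"
    unfolding is_rep_def
  proof (intro conjI ballI)
    fix g assume "g \<in> carrier G" thus "A g \<in> carrier_mat k k" unfolding A_def' by simp
  next
    show "A \<one>\<^bsub>G\<^esub> = 1\<^sub>m k" unfolding A_def' using M1[OF r1] kn by (intro eq_matI) auto
  next
    fix g h assume g: "g \<in> carrier G" and h: "h \<in> carrier G"
    show "A (g \<otimes>\<^bsub>G\<^esub> h) = A g * A h"
    proof (rule eq_matI)
      fix i j assume "i < dim_row (A g * A h)" "j < dim_col (A g * A h)"
      hence i: "i < k" and j: "j < k" unfolding A_def' by auto
      have "A (g \<otimes>\<^bsub>G\<^esub> h) $$ (i,j) = (M g * M h) $$ (i,j)" unfolding A_def' using i j Mmul[OF g h] by simp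
      also have "\<dots> = (\<Sum>l<n. M g $$ (i,l) * M h $$ (l,j))"
        by (rule mult_entry[OF Mc[OF g] Mc[OF h]]) (use i j kn in auto)
      also have "\<dots> = (\<Sum>l<k. M g $$ (i,l) * M h $$ (l,j)) + (\<Sum>l<n-k. M g $$ (i,l+k) * M h $$ (l+k,j))"
        by (rule sum_split_shift[OF kn])
      also have "(\<Sum>l<n-k. M g $$ (i,l+k) * M h $$ (l+k,j)) = 0"
        using Mz[OF h _ _ j] by (intro sum.neutral) auto
      also have "(\<Sum>l<k. M g $$ (i,l) * M h $$ (l,j)) = (A g * A h) $$ (i,j)"
        by (subst mult_entry[of _ k k _ k]) (use i j in \<open>auto simp: A_def'\<close>)
      finally show "A (g \<otimes>\<^bsub>G\<^esub> h) $$ (i,j) = (A g * A h) $$ (i,j)" by simp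
    qed (auto simp: A_def')
  qed
  show "is_rep G (n-k) C"
    unfolding is_rep_def
  proof (intro conjI ballI)
    fix g assume "g \<in> carrier G" thus "C g \<in> carrier_mat (n-k) (n-k)" unfolding C_def' by simp
  next
    show "C \<one>\<^bsub>G\<^esub> = 1\<^sub>m (n-k)" unfolding C_def' using M1[OF r1] kn by (intro eq_matI) auto
  next
    fix g h assume g: "g \<in> carrier G" and h: "h \<in> carrier G"
    show "C (g \<otimes>\<^bsub>G\<^esub> h) = C g * C h"
    proof (rule eq_matI)
      fix i j assume "i < dim_row (C g * C h)" "j < dim_col (C g * C h)"
      hence i: "i < n-k" and j: "j < n-k" unfolding C_def' by auto
      have "C (g \<otimes>\<^bsub>G\<^esub> h) $$ (i,j) = (M g * M h) $$ (i+k,j+k)" unfolding C_def' using i j Mmul[OF g h] by simp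
      also have "\<dots> = (\<Sum>l<n. M g $$ (i+k,l) * M h $$ (l,j+k))"
        by (rule mult_entry[OF Mc[OF g] Mc[OF h]]) (use i j kn in auto)
      also have "\<dots> = (\<Sum>l<k. M g $$ (i+k,l) * M h $$ (l,j+k)) + (\<Sum>l<n-k. M g $$ (i+k,l+k) * M h $$ (l+k,j+k))"
        by (rule sum_split_shift[OF kn])
      also have "(\<Sum>l<k. M g $$ (i+k,l) * M h $$ (l,j+k)) = 0"
        using Mz[OF g] i by (intro sum.neutral) auto
      also have "(\<Sum>l<n-k. M g $$ (i+k,l+k) * M h $$ (l+k,j+k)) = (C g * C h) $$ (i,j)"
        by (subst mult_entry[of _ "n-k" "n-k" _ "n-k"]) (use i j in \<open>auto simp: C_def'\<close>)
      finally show "C (g \<otimes>\<^bsub>G\<^esub> h) $$ (i,j) = (C g * C h) $$ (i,j)" by simp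
    qed (auto simp: C_def')
  qed
  show "mat_trace (\<rho> h) = mat_trace (A h) + mat_trace (C h)" if h: "h \<in> carrier G" for h
  proof -
    have rh: "\<rho> h \<in> carrier_mat n n" using rc h by auto
    have "mat_trace (M h) = mat_trace ((Q * \<rho> h) * P)" unfolding M_def ..
    also have "\<dots> = mat_trace (P * (Q * \<rho> h))" by (rule mat_trace_comm) (use Pc Qc rh in auto)
    also have "P * (Q * \<rho> h) = \<rho> h" by (rule PQX[OF rh])
    finally have t1: "mat_trace (M h) = mat_trace (\<rho> h)" .
    have "mat_trace (M h) = (\<Sum>i<n. M h $$ (i,i))" by (rule mat_trace_carrier[OF Mc[OF h]])
    also have "\<dots> = (\<Sum>i<k. M h $$ (i,i)) + (\<Sum>i<n-k. M h $$ (i+k,i+k))" by (rule sum_split_shift[OF kn])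
    also have "\<dots> = mat_trace (A h) + mat_trace (C h)"
      unfolding A_def' C_def' mat_trace_def by simp
    finally show ?thesis using t1 by simp
  qed
  show "A h = 1\<^sub>m k \<and> C h = 1\<^sub>m (n-k)" if "\<rho> h = 1\<^sub>m n" for h
    using M1[OF that] kn unfolding A_def' C_def' by (auto intro!: eq_matI)
qed

lemma schur:
  fixes G :: "('g,'b) monoid_scheme" and \<rho> :: "'g \<Rightarrow> complex mat"
  assumes irr: "irreducible_rep G n \<rho>" and A: "A \<in> carrier_mat n n"
    and comm: "\<And>h. h \<in> carrier G \<Longrightarrow> A * \<rho> h = \<rho> h * A"
  shows "\<exists>c. A = c \<cdot>\<^sub>m 1\<^sub>m n"
proof -
  have rep: "is_rep G n \<rho>" and n0: "n > 0"
    and irrW: "\<And>W. invariant_subspace G n \<rho> W \<Longrightarrow> W = {0\<^sub>v n} \<or> W = carrier_vec n"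
    using irr unfolding irreducible_rep_def by auto
  have rc: "\<And>h. h \<in> carrier G \<Longrightarrow> \<rho> h \<in> carrier_mat n n" using rep unfolding is_rep_def by auto
  obtain as where cp: "char_poly A = (\<Prod>a\<leftarrow>as. [:- a, 1:])" and las: "length as = n"
    using char_poly_factorized[OF A] by blast
  obtain e rest where as: "as = e # rest" using las n0 by (cases as) auto
  have "poly (char_poly A) e = 0" unfolding cp as by simp
  hence "eigenvalue A e" using eigenvalue_root_char_poly[OF A] by simp
  then obtain v where ev: "eigenvector A v e" unfolding eigenvalue_def by blast
  have vc: "v \<in> carrier_vec n" and v0: "v \<noteq> 0\<^sub>v n" and Av: "A *\<^sub>v v = e \<cdot>\<^sub>v v"
    using ev A unfolding eigenvector_def by auto
  define W where "W = {w \<in> carrier_vec n. A *\<^sub>v w = e \<cdot>\<^sub>v w}"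
  have inv: "invariant_subspace G n \<rho> W"
    unfolding invariant_subspace_def
  proof (intro conjI ballI allI)
    show "W \<subseteq> carrier_vec n" unfolding W_def by auto
    show "0\<^sub>v n \<in> W" unfolding W_def using A by (auto intro!: eq_vecI simp: scalar_prod_def)
  next
    fix x y assume "x \<in> W" "y \<in> W"
    thus "x + y \<in> W" unfolding W_def using A
      by (auto simp: mult_add_distrib_mat_vec smult_add_distrib_vec)
  next
    fix c x assume "x \<in> W"
    thus "c \<cdot>\<^sub>v x \<in> W" unfolding W_def using A
      by (auto simp: mult_mat_vec smult_smult_assoc mult.commute)
  next
    fix h x assume h: "h \<in> carrier G" and x: "x \<in> W"
    have xc: "x \<in> carrier_vec n" and Ax: "A *\<^sub>v x = e \<cdot>\<^sub>v x" using x unfolding W_def by auto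
    have rh: "\<rho> h \<in> carrier_mat n n" using rc h .
    have "A *\<^sub>v (\<rho> h *\<^sub>v x) = (A * \<rho> h) *\<^sub>v x" using assoc_mult_mat_vec[OF A rh xc] by simp
    also have "\<dots> = (\<rho> h * A) *\<^sub>v x" using comm[OF h] by simp
    also have "\<dots> = \<rho> h *\<^sub>v (e \<cdot>\<^sub>v x)" using assoc_mult_mat_vec[OF rh A xc] Ax by simp
    also have "\<dots> = e \<cdot>\<^sub>v (\<rho> h *\<^sub>v x)" using mult_mat_vec[OF rh xc] .
    finally show "\<rho> h *\<^sub>v x \<in> W" unfolding W_def using rh xc by auto
  qed
  have "v \<in> W" unfolding W_def using vc Av by auto
  hence W: "W = carrier_vec n" using irrW[OF inv] v0 by auto
  have "A = e \<cdot>\<^sub>m 1\<^sub>m n"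
  proof (rule eq_matI)
    fix i j assume "i < dim_row (e \<cdot>\<^sub>m 1\<^sub>m n)" "j < dim_col (e \<cdot>\<^sub>m 1\<^sub>m n)"
    hence i: "i < n" and j: "j < n" by auto
    have uc: "unit_vec n j \<in> W" using W j by simp
    hence "A *\<^sub>v unit_vec n j = e \<cdot>\<^sub>v unit_vec n j" unfolding W_def by auto
    hence "(A *\<^sub>v unit_vec n j) $ i = (e \<cdot>\<^sub>v unit_vec n j) $ i" by simp
    moreover have "(A *\<^sub>v unit_vec n j) $ i = A $$ (i,j)"
      using A i j by (simp add: index_mult_mat_vec scalar_prod_right_unit)
    ultimately show "A $$ (i, j) = (e \<cdot>\<^sub>m 1\<^sub>m n) $$ (i, j)" using i j by auto
  qed (use A in auto)
  thus ?thesis by blast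
qed

lemma exists_irr:
  fixes G :: "('g,'b) monoid_scheme" and \<rho> :: "'g \<Rightarrow> complex mat"
  assumes "is_rep G n \<rho>" "\<forall>h\<in>N. \<rho> h = 1\<^sub>m n" "g \<in> carrier G" "mat_trace (\<rho> g) \<noteq> of_nat n"
  shows "\<exists>m \<sigma>. irreducible_rep G m \<sigma> \<and> (\<forall>h\<in>N. \<sigma> h = 1\<^sub>m m) \<and> mat_trace (\<sigma> g) \<noteq> of_nat m"
  using assms
proof (induct n arbitrary: \<rho> rule: less_induct)
  case (less n \<rho>)
  show ?case
  proof (cases "irreducible_rep G n \<rho>")
    case True thus ?thesis using less(3,5) by blast
  next
    case False
    have n0: "n > 0"
    proof (rule ccontr)
      assume "\<not> n > 0"
      hence "n = 0" by simp
      moreover have "\<rho> g \<in> carrier_mat n n" using less(2,4) unfolding is_rep_def by auto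
      ultimately have "mat_trace (\<rho> g) = of_nat n" unfolding mat_trace_def by simp
      thus False using less(5) by simp
    qed
    obtain W where W: "invariant_subspace G n \<rho> W" "W \<noteq> {0\<^sub>v n}" "W \<noteq> carrier_vec n"
      using False less(2) n0 unfolding irreducible_rep_def by blast
    have "\<exists>k P Q. 0 < k \<and> k < n \<and> P \<in> carrier_mat n n \<and> Q \<in> carrier_mat n n \<and>
       Q * P = 1\<^sub>m n \<and> P * Q = 1\<^sub>m n \<and>
       (\<forall>h\<in>carrier G. \<forall>i j. k \<le> i \<longrightarrow> i < n \<longrightarrow> j < k \<longrightarrow> (Q * \<rho> h * P) $$ (i,j) = 0)"
      by (rule block_reduce[OF less(2) W])
    then obtain k P Q where k0: "0 < k" and kn: "k < n" and Pc: "P \<in> carrier_mat n n"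
      and Qc: "Q \<in> carrier_mat n n" and QP: "Q * P = 1\<^sub>m n" and PQ: "P * Q = 1\<^sub>m n"
      and z: "\<forall>h\<in>carrier G. \<forall>i j. k \<le> i \<longrightarrow> i < n \<longrightarrow> j < k \<longrightarrow> (Q * \<rho> h * P) $$ (i,j) = 0"
      by (elim exE conjE)
    define A where "A = (\<lambda>h. mat k k (\<lambda>(i,j). (Q * \<rho> h * P) $$ (i,j)))"
    define C where "C = (\<lambda>h. mat (n-k) (n-k) (\<lambda>(i,j). (Q * \<rho> h * P) $$ (i+k,j+k)))"
    have kn': "k \<le> n" using kn by simp
    have repA: "is_rep G k A" unfolding A_def by (rule block_split(1)[OF less(2) Pc Qc QP PQ kn' z])
    have repC: "is_rep G (n-k) C" unfolding C_def by (rule block_split(2)[OF less(2) Pc Qc QP PQ kn' z])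
    have ACN: "A h = 1\<^sub>m k \<and> C h = 1\<^sub>m (n-k)" if h: "h \<in> N" for h
    proof -
      have "\<rho> h = 1\<^sub>m n" using less(3) h by blast
      show ?thesis unfolding A_def C_def by (rule block_split(4)[OF less(2) Pc Qc QP PQ kn' z \<open>\<rho> h = 1\<^sub>m n\<close>])
    qed
    have AN: "\<forall>h\<in>N. A h = 1\<^sub>m k" and CN: "\<forall>h\<in>N. C h = 1\<^sub>m (n-k)" using ACN by auto
    have tr: "mat_trace (\<rho> g) = mat_trace (A g) + mat_trace (C g)" unfolding A_def C_def by (rule block_split(3)[OF less(2) Pc Qc QP PQ kn' z less(4)])
    have nsplit: "(of_nat n :: complex) = of_nat k + of_nat (n-k)" using kn by simp
    show ?thesis
    proof (cases "mat_trace (A g) = of_nat k")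
      case False
      show ?thesis by (rule less(1)[OF kn repA AN less(4) False])
    next
      case True
      hence "mat_trace (C g) \<noteq> of_nat (n-k)" using tr nsplit less(5) by auto
      moreover have "n - k < n" using k0 kn by simp
      ultimately show ?thesis using less(1)[OF _ repC CN less(4)] by blast
    qed
  qed
qed

lemma (in group) perm_rep:
  assumes fin: "finite (carrier G)" and nN: "N \<lhd> G"
  shows "\<exists>m \<rho>. is_rep G m \<rho> \<and> (\<forall>h\<in>N. \<rho> h = 1\<^sub>m m) \<and>
           (\<forall>g\<in>carrier G. g \<notin> N \<longrightarrow> mat_trace (\<rho> g) \<noteq> of_nat m)"
proof -
  have sg: "subgroup N G" using nN by (rule normal_imp_subgroup)
  have Nc: "N \<subseteq> carrier G" using subgroup.subset[OF sg] .
  have finR: "finite (rcosets N)" unfolding RCOSETS_def using fin by simp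
  obtain cs where cs: "set cs = rcosets N" "distinct cs" using finite_distinct_list[OF finR] by blast
  define m where "m = length cs"
  have csrep: "\<exists>a\<in>carrier G. cs ! i = N #> a" if "i < m" for i
  proof -
    have "cs ! i \<in> rcosets N" using cs(1) that nth_mem unfolding m_def by blast
    thus ?thesis unfolding RCOSETS_def by blast
  qed
  have csc: "cs ! i \<subseteq> carrier G" if "i < m" for i
    using csrep[OF that] r_coset_subset_G[OF Nc] by blast
  have clos: "\<exists>l<m. cs ! l = cs ! i #> h" if i: "i < m" and h: "h \<in> carrier G" for i h
  proof -
    obtain a where a: "a \<in> carrier G" "cs ! i = N #> a" using csrep[OF i] by blast
    have "cs ! i #> h = N #> (a \<otimes> h)" using a coset_mult_assoc[OF Nc a(1) h] by simp
    also have "\<dots> \<in> rcosets N" by (rule rcosetsI[OF Nc]) (use a h in simp)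
    finally have "cs ! i #> h \<in> set cs" using cs(1) by simp
    thus ?thesis unfolding m_def in_set_conv_nth by metis
  qed
  have csinj: "cs ! i = cs ! j \<longleftrightarrow> i = j" if "i < m" "j < m" for i j
    using nth_eq_iff_index_eq[OF cs(2)] that unfolding m_def by blast
  define \<rho> where "\<rho> = (\<lambda>h. mat m m (\<lambda>(i,j). if cs ! j = cs ! i #> h then 1 else (0::complex)))"
  have one: "\<rho> h = 1\<^sub>m m" if h: "\<And>i. i < m \<Longrightarrow> cs ! i #> h = cs ! i" for h
    unfolding \<rho>_def by (rule eq_matI) (auto simp: h csinj)
  have rep: "is_rep G m \<rho>"
    unfolding is_rep_def
  proof (intro conjI ballI)
    fix g assume "g \<in> carrier G" thus "\<rho> g \<in> carrier_mat m m" unfolding \<rho>_def by simp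
  next
    show "\<rho> \<one> = 1\<^sub>m m" by (rule one) (use csc coset_mult_one in blast)
  next
    fix g h assume g: "g \<in> carrier G" and h: "h \<in> carrier G"
    show "\<rho> (g \<otimes> h) = \<rho> g * \<rho> h"
    proof (rule eq_matI)
      fix i j assume "i < dim_row (\<rho> g * \<rho> h)" "j < dim_col (\<rho> g * \<rho> h)"
      hence i: "i < m" and j: "j < m" unfolding \<rho>_def by auto
      obtain l0 where l0: "l0 < m" "cs ! l0 = cs ! i #> g" using clos[OF i g] by blast
      have "(\<rho> g * \<rho> h) $$ (i,j) = (\<Sum>l<m. \<rho> g $$ (i,l) * \<rho> h $$ (l,j))"
        by (rule mult_entry) (use i j in \<open>auto simp: \<rho>_def\<close>)
      also have "\<dots> = (\<Sum>l<m. if l = l0 then \<rho> h $$ (l0,j) else 0)"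
      proof (rule sum.cong[OF refl])
        fix l assume "l \<in> {..<m}"
        hence l: "l < m" by simp
        have "\<rho> g $$ (i,l) = (if l = l0 then 1 else 0)"
          unfolding \<rho>_def using i l l0 csinj[OF l l0(1)] by auto
        thus "\<rho> g $$ (i,l) * \<rho> h $$ (l,j) = (if l = l0 then \<rho> h $$ (l0,j) else 0)" by simp
      qed
      also have "\<dots> = \<rho> h $$ (l0,j)" using l0(1) by simp
      also have "\<dots> = (if cs ! j = (cs ! i #> g) #> h then 1 else 0)"
        unfolding \<rho>_def using l0 j by simp
      also have "(cs ! i #> g) #> h = cs ! i #> (g \<otimes> h)" by (rule coset_mult_assoc[OF csc[OF i] g h])
      also have "(if cs ! j = cs ! i #> (g \<otimes> h) then 1 else 0) = \<rho> (g \<otimes> h) $$ (i,j)"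
        unfolding \<rho>_def using i j by simp
      finally show "\<rho> (g \<otimes> h) $$ (i,j) = (\<rho> g * \<rho> h) $$ (i,j)" by simp
    qed (auto simp: \<rho>_def)
  qed
  have triv: "\<rho> h = 1\<^sub>m m" if hN: "h \<in> N" for h
  proof (rule one)
    fix i assume i: "i < m"
    obtain a where a: "a \<in> carrier G" "cs ! i = N #> a" using csrep[OF i] by blast
    have hc: "h \<in> carrier G" using hN Nc by blast
    have "a \<otimes> h \<otimes> inv a \<in> N" using normal.inv_op_closed2[OF nN a(1) hN] .
    hence "a \<otimes> h \<otimes> inv a \<otimes> a \<in> N #> a" by (rule rcosI[OF _ Nc a(1)])
    moreover have "a \<otimes> h \<otimes> inv a \<otimes> a = a \<otimes> h" using a(1) hc by (simp add: m_assoc)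
    ultimately have "a \<otimes> h \<in> N #> a" by simp
    hence "N #> a = N #> (a \<otimes> h)" by (rule repr_independence[OF _ a(1) sg])
    thus "cs ! i #> h = cs ! i" using a coset_mult_assoc[OF Nc a(1) hc] by simp
  qed
  have notr: "mat_trace (\<rho> g) \<noteq> of_nat m" if g: "g \<in> carrier G" and gN: "g \<notin> N" for g
  proof -
    have diag: "\<rho> g $$ (i,i) = 0" if i: "i < m" for i
    proof -
      obtain a where a: "a \<in> carrier G" "cs ! i = N #> a" using csrep[OF i] by blast
      have "cs ! i \<noteq> cs ! i #> g"
      proof
        assume "cs ! i = cs ! i #> g"
        hence eq: "N #> a = N #> (a \<otimes> g)" using a coset_mult_assoc[OF Nc a(1) g] by simp
        have "a \<otimes> g \<in> N #> (a \<otimes> g)" by (rule rcos_self) (use a g sg in simp_all)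
        hence "a \<otimes> g \<in> N #> a" using eq by simp
        then obtain n where n: "n \<in> N" "a \<otimes> g = n \<otimes> a" unfolding r_coset_def by blast
        have nc: "n \<in> carrier G" using n(1) Nc by blast
        have "g = inv a \<otimes> (a \<otimes> g)" using a(1) g by (simp add: m_assoc[symmetric])
        also have "\<dots> = inv a \<otimes> n \<otimes> a" using n(2) a(1) nc by (simp add: m_assoc)
        finally have "g \<in> N" using normal.inv_op_closed1[OF nN a(1) n(1)] by simp
        thus False using gN by simp
      qed
      thus ?thesis unfolding \<rho>_def using i by simp
    qed
    have "mat_trace (\<rho> g) = (\<Sum>i<m. \<rho> g $$ (i,i))" by (rule mat_trace_carrier) (simp add: \<rho>_def)
    also have "\<dots> = 0" using diag by simp
    finally have t0: "mat_trace (\<rho> g) = 0" .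
    have "N #> \<one> \<in> rcosets N" by (rule rcosetsI[OF Nc]) simp
    hence "cs \<noteq> []" using cs(1) by auto
    hence "m > 0" unfolding m_def by simp
    thus ?thesis using t0 by simp
  qed
  show ?thesis using rep triv notr by blast
qed

lemma (in group) scalar_center:
  assumes fin: "finite (carrier G)" and irr: "irreducible_rep G d \<sigma>" and a: "a \<in> carrier G"
    and comm: "\<And>h. h \<in> carrier G \<Longrightarrow> \<sigma> a * \<sigma> h = \<sigma> h * \<sigma> a"
  shows "a \<in> char_center G (\<lambda>g. mat_trace (\<sigma> g))"
proof -
  have rep: "is_rep G d \<sigma>" and d0: "d > 0" using irr unfolding irreducible_rep_def by auto
  have rc: "\<And>h. h \<in> carrier G \<Longrightarrow> \<sigma> h \<in> carrier_mat d d"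
    and s1: "\<sigma> \<one> = 1\<^sub>m d"
    and sm: "\<And>g h. g \<in> carrier G \<Longrightarrow> h \<in> carrier G \<Longrightarrow> \<sigma> (g \<otimes> h) = \<sigma> g * \<sigma> h"
    using rep unfolding is_rep_def by auto
  obtain c where c: "\<sigma> a = c \<cdot>\<^sub>m 1\<^sub>m d" using schur[OF irr rc[OF a] comm] by blast
  have pw: "\<sigma> (a [^] k) = c^k \<cdot>\<^sub>m 1\<^sub>m d" for k :: nat
  proof (induct k)
    case 0 show ?case using s1 by (auto intro!: eq_matI)
  next
    case (Suc k)
    have "\<sigma> (a [^] Suc k) = \<sigma> (a [^] k \<otimes> a)" by simp
    also have "\<dots> = \<sigma> (a [^] k) * \<sigma> a" using sm a by simp
    also have "\<dots> = (c^k \<cdot>\<^sub>m 1\<^sub>m d) * (c \<cdot>\<^sub>m 1\<^sub>m d)" unfolding Suc c ..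
    also have "\<dots> = c^k \<cdot>\<^sub>m (1\<^sub>m d * (c \<cdot>\<^sub>m 1\<^sub>m d))"
      by (rule mult_smult_assoc_mat) auto
    also have "\<dots> = c^Suc k \<cdot>\<^sub>m 1\<^sub>m d" by (rule eq_matI) auto
    finally show ?case .
  qed
  have "\<sigma> (a [^] Coset.order G) = 1\<^sub>m d" using pow_order_eq_1[OF a] s1 by simp
  hence "1\<^sub>m d = c ^ Coset.order G \<cdot>\<^sub>m 1\<^sub>m d" using pw by simp
  hence "(1\<^sub>m d) $$ (0,0) = (c ^ Coset.order G \<cdot>\<^sub>m 1\<^sub>m d) $$ (0,0)" by simp
  hence c1: "c ^ Coset.order G = 1" using d0 by simp
  have op: "Coset.order G > 0" using order_gt_0_iff_finite fin by simp
  have "cmod c ^ Coset.order G = 1 ^ Coset.order G" using c1 by (metis norm_power norm_one power_one)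
  hence cm: "cmod c = 1" using power_eq_imp_eq_base[of "cmod c" "Coset.order G" 1] op by simp
  have "mat_trace (\<sigma> a) = of_nat d * c" unfolding c mat_trace_def by simp
  hence "cmod (mat_trace (\<sigma> a)) = of_nat d" using cm by (simp add: norm_mult)
  moreover have "cmod (mat_trace (\<sigma> \<one>)) = of_nat d" using s1 mat_trace_one by simp
  ultimately show ?thesis unfolding char_center_def using a by simp
qed

lemma (in group) main_lemma:
  assumes fin: "finite (carrier G)" and nc: "\<not> comm_group G" and nN: "N \<lhd> G"
  shows "K_set G \<subseteq> N \<or>
         (N \<subseteq> group_center G \<and>
          group_center (G Mod N) = (\<lambda>z. N #> z) ` group_center G)"
proof (rule disjCI)
  have sg: "subgroup N G" using nN by (rule normal_imp_subgroup)
  have Nc: "N \<subseteq> carrier G" using subgroup.subset[OF sg] .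
  assume nr: "\<not> (N \<subseteq> group_center G \<and> group_center (G Mod N) = (\<lambda>z. N #> z) ` group_center G)"
  have "\<exists>x\<in>carrier G. x \<notin> group_center G \<and> (\<forall>h\<in>carrier G. N #> (x \<otimes> h) = N #> (h \<otimes> x))"
  proof (cases "N \<subseteq> group_center G")
    case False
    then obtain x where x: "x \<in> N" "x \<notin> group_center G" by blast
    have xc: "x \<in> carrier G" using x(1) Nc by blast
    have "N #> (x \<otimes> h) = N #> (h \<otimes> x)" if h: "h \<in> carrier G" for h
    proof -
      have ix: "inv x \<in> N" using subgroup.m_inv_closed[OF sg x(1)] .
      have "h \<otimes> inv x \<otimes> inv h \<in> N" using normal.inv_op_closed2[OF nN h ix] .
      hence n: "x \<otimes> (h \<otimes> inv x \<otimes> inv h) \<in> N" using subgroup.m_closed[OF sg x(1)] by blast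
      have eq: "x \<otimes> (h \<otimes> inv x \<otimes> inv h) \<otimes> (h \<otimes> x) = x \<otimes> h"
      proof -
        have c1: "inv h \<otimes> (h \<otimes> x) = x" using xc h by (simp add: m_assoc[symmetric])
        show ?thesis using xc h by (simp add: m_assoc c1)
      qed
      have "x \<otimes> h \<in> N #> (h \<otimes> x)" using rcosI[OF n Nc] eq xc h by (metis m_closed)
      thus ?thesis using repr_independence[OF _ _ sg] xc h by (metis m_closed)
    qed
    thus ?thesis using xc x(2) by blast
  next
    case True
    with nr have neq: "group_center (G Mod N) \<noteq> (\<lambda>z. N #> z) ` group_center G" by blast
    have sub: "(\<lambda>z. N #> z) ` group_center G \<subseteq> group_center (G Mod N)"
    proof
      fix C assume "C \<in> (\<lambda>z. N #> z) ` group_center G"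
      then obtain z where z: "z \<in> group_center G" "C = N #> z" by blast
      have zc: "z \<in> carrier G" and zcomm: "\<And>g. g \<in> carrier G \<Longrightarrow> z \<otimes> g = g \<otimes> z"
        using z(1) unfolding group_center_def by auto
      have "C \<in> rcosets N" using z(2) rcosetsI[OF Nc zc] by simp
      moreover have "C <#> D = D <#> C" if D: "D \<in> rcosets N" for D
      proof -
        obtain a where a: "a \<in> carrier G" "D = N #> a" using D unfolding RCOSETS_def by blast
        have "C <#> D = N #> (z \<otimes> a)" using z(2) a normal.rcos_sum[OF nN zc a(1)] by simp
        also have "\<dots> = N #> (a \<otimes> z)" using zcomm[OF a(1)] by simp
        also have "\<dots> = D <#> C" using z(2) a normal.rcos_sum[OF nN a(1) zc] by simp
        finally show ?thesis .
      qed
      ultimately show "C \<in> group_center (G Mod N)" unfolding group_center_def FactGroup_def by simp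
    qed
    obtain C where C: "C \<in> group_center (G Mod N)" "C \<notin> (\<lambda>z. N #> z) ` group_center G"
      using neq sub by blast
    have Cr: "C \<in> rcosets N" and Ccomm: "\<And>D. D \<in> rcosets N \<Longrightarrow> C <#> D = D <#> C"
      using C(1) unfolding group_center_def FactGroup_def by auto
    obtain x where x: "x \<in> carrier G" "C = N #> x" using Cr unfolding RCOSETS_def by blast
    have xz: "x \<notin> group_center G" using C(2) x(2) by blast
    have "N #> (x \<otimes> h) = N #> (h \<otimes> x)" if h: "h \<in> carrier G" for h
    proof -
      have "N #> (x \<otimes> h) = C <#> (N #> h)" using x normal.rcos_sum[OF nN x(1) h] by simp
      also have "\<dots> = (N #> h) <#> C" using Ccomm rcosetsI[OF Nc h] by simp
      also have "\<dots> = N #> (h \<otimes> x)" using x normal.rcos_sum[OF nN h x(1)] by simp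
      finally show ?thesis .
    qed
    thus ?thesis using x(1) xz by blast
  qed
  then obtain x where x: "x \<in> carrier G" "x \<notin> group_center G"
    and xcm: "\<And>h. h \<in> carrier G \<Longrightarrow> N #> (x \<otimes> h) = N #> (h \<otimes> x)" by blast
  have K: "K_set G = carrier G \<inter> \<Inter> {char_ker G \<chi> |\<chi>. \<chi> \<in> Irr G \<and> group_center G \<subset> char_center G \<chi>}"
    unfolding K_set_def using nc by simp
  show "K_set G \<subseteq> N"
  proof
    fix g assume gK: "g \<in> K_set G"
    have gc: "g \<in> carrier G" using gK K by blast
    show "g \<in> N"
    proof (rule ccontr)
      assume gN: "g \<notin> N"
      have "\<exists>m \<rho>. is_rep G m \<rho> \<and> (\<forall>h\<in>N. \<rho> h = 1\<^sub>m m) \<and>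
           (\<forall>g\<in>carrier G. g \<notin> N \<longrightarrow> mat_trace (\<rho> g) \<noteq> of_nat m)"
        by (rule perm_rep[OF fin nN])
      then obtain m \<rho> where \<rho>: "is_rep G m \<rho>" "\<forall>h\<in>N. \<rho> h = 1\<^sub>m m"
        "\<forall>g\<in>carrier G. g \<notin> N \<longrightarrow> mat_trace (\<rho> g) \<noteq> of_nat m" by (elim exE conjE)
      have "mat_trace (\<rho> g) \<noteq> of_nat m" using \<rho>(3) gc gN by blast
      hence "\<exists>d \<sigma>. irreducible_rep G d \<sigma> \<and> (\<forall>h\<in>N. \<sigma> h = 1\<^sub>m d) \<and> mat_trace (\<sigma> g) \<noteq> of_nat d"
        by (rule exists_irr[OF \<rho>(1) \<rho>(2) gc])
      then obtain d \<sigma> where \<sigma>: "irreducible_rep G d \<sigma>" "\<forall>h\<in>N. \<sigma> h = 1\<^sub>m d"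
        "mat_trace (\<sigma> g) \<noteq> of_nat d" by (elim exE conjE)
      have rep: "is_rep G d \<sigma>" using \<sigma>(1) unfolding irreducible_rep_def by auto
      have rc: "\<And>h. h \<in> carrier G \<Longrightarrow> \<sigma> h \<in> carrier_mat d d"
        and s1: "\<sigma> \<one> = 1\<^sub>m d"
        and sm: "\<And>g h. g \<in> carrier G \<Longrightarrow> h \<in> carrier G \<Longrightarrow> \<sigma> (g \<otimes> h) = \<sigma> g * \<sigma> h"
        using rep unfolding is_rep_def by auto
      define \<chi> where "\<chi> = (\<lambda>g. mat_trace (\<sigma> g))"
      have \<chi>Irr: "\<chi> \<in> Irr G" unfolding Irr_def \<chi>_def using \<sigma>(1) by blast
      have Zsub: "group_center G \<subseteq> char_center G \<chi>"
      proof
        fix z assume z: "z \<in> group_center G"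
        have zc: "z \<in> carrier G" and zcomm: "\<And>g. g \<in> carrier G \<Longrightarrow> z \<otimes> g = g \<otimes> z"
          using z unfolding group_center_def by auto
        have "\<sigma> z * \<sigma> h = \<sigma> h * \<sigma> z" if h: "h \<in> carrier G" for h
          using sm[OF zc h] sm[OF h zc] zcomm[OF h] by simp
        thus "z \<in> char_center G \<chi>" unfolding \<chi>_def by (rule scalar_center[OF fin \<sigma>(1) zc])
      qed
      have "\<sigma> x * \<sigma> h = \<sigma> h * \<sigma> x" if h: "h \<in> carrier G" for h
      proof -
        have xh: "x \<otimes> h \<in> carrier G" and hx: "h \<otimes> x \<in> carrier G" using x(1) h by auto
        have "x \<otimes> h \<in> N #> (x \<otimes> h)" by (rule rcos_self[OF xh sg])
        hence "x \<otimes> h \<in> N #> (h \<otimes> x)" using xcm[OF h] by simp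
        then obtain n where n: "n \<in> N" "x \<otimes> h = n \<otimes> (h \<otimes> x)" unfolding r_coset_def by blast
        have nc: "n \<in> carrier G" using n(1) Nc by blast
        have "\<sigma> x * \<sigma> h = \<sigma> (x \<otimes> h)" using sm[OF x(1) h] by simp
        also have "\<dots> = \<sigma> n * \<sigma> (h \<otimes> x)" using n(2) sm[OF nc hx] by simp
        also have "\<dots> = \<sigma> (h \<otimes> x)" using \<sigma>(2) n(1) rc[OF hx] by simp
        also have "\<dots> = \<sigma> h * \<sigma> x" using sm[OF h x(1)] .
        finally show ?thesis .
      qed
      hence xcc: "x \<in> char_center G \<chi>" unfolding \<chi>_def by (rule scalar_center[OF fin \<sigma>(1) x(1)])
      have strict: "group_center G \<subset> char_center G \<chi>" using Zsub xcc x(2) by blast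
      have "g \<in> char_ker G \<chi>" using gK K \<chi>Irr strict by blast
      moreover have "\<chi> \<one> = of_nat d" unfolding \<chi>_def using s1 mat_trace_one by simp
      ultimately show False using \<sigma>(3) unfolding char_ker_def \<chi>_def by simp
    qed
  qed
qed

theorem theoremA:
  fixes G :: "('a, 'b) monoid_scheme" and N :: "'a set"
  assumes "group G" and "finite (carrier G)" and "\<not> comm_group G"
    and "N \<lhd> G"
  shows "K_set G \<subseteq> N \<or>
         (N \<subseteq> group_center G \<and>
          group_center (G Mod N) = (\<lambda>z. N #>\<^bsub>G\<^esub> z) ` group_center G)"
  by (rule group.main_lemma[OF assms])

end
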